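(* Let $m>0$ and $\lambda<0$. Let $v_\lambda$ be the solution on $[m/2,\infty)$ of $$v''(r)+v(r)\Big(\frac{1}{4r^2}+\frac{m}{r^3}\Big(1+\frac{m}{2r}\Big)^{-2}+\lambda\Big(1+\frac{m}{2r}\Big)^4\Big)=0,\qquad v(m/2)=1,\ v'(m/2)=m^{-1}.$$ Then $v_\lambda$ has at most one zero in $[m/2,\infty)$. Equivalently, the solution $\gamma_\lambda=v_\lambda'/v_\lambda$ of the Riccati equation $$\gamma'+\gamma^2=-\frac{1}{4r^2}-\frac{m}{r^3}\Big(1+\frac{m}{2r}\Big)^{-2}-\lambda\Big(1+\frac{m}{2r}\Big)^4,\qquad \gamma(m/2)=m^{-1},$$ has at most one singularity (a point where it passes from $-\infty$ to $+\infty$). *)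

theory Defs
  imports Complex_Main
begin

definition potential :: "real \<Rightarrow> real \<Rightarrow> real \<Rightarrow> real" where
  "potential m lam r =
     1 / (4 * r^2) + (m / r^3) / (1 + m / (2*r))^2 + lam * (1 + m / (2*r))^4"

end

theory Submission
  imports Defs
begin

definition NN :: "real \<Rightarrow> real \<Rightarrow> real" where
  "NN m r = 4*m - (2*r-m)*(ln(2*r/m) - 2)"
definition ff :: "real \<Rightarrow> real \<Rightarrow> real" where
  "ff m r = NN m r / (2*r+m)"
definition ff' :: "real \<Rightarrow> real \<Rightarrow> real" where
  "ff' m r = (m^2 - 4*r^2 - 4*m*r*ln(2*r/m))/(r*(2*r+m)^2)"
definition ff'' :: "real \<Rightarrow> real \<Rightarrow> real" where
  "ff'' m r = -(ff' m r)/r - ff m r * (4*m/(r*(2*r+m)^2))"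
definition uu :: "real \<Rightarrow> real \<Rightarrow> real" where
  "uu m r = sqrt r * ff m r"
definition uu' :: "real \<Rightarrow> real \<Rightarrow> real" where
  "uu' m r = ff m r/(2*sqrt r) + sqrt r * ff' m r"
definition uu'' :: "real \<Rightarrow> real \<Rightarrow> real" where
  "uu'' m r = -(ff m r)/(4*r*sqrt r) + ff' m r/sqrt r + sqrt r * ff'' m r"

lemma ff_deriv: assumes "m > 0" "r > 0"
  shows "(ff m has_real_derivative ff' m r) (at r)"
proof -
  have "((\<lambda>r. (4*m - (2*r-m)*(ln(2*r/m) - 2))/(2*r+m)) has_real_derivative ff' m r) (at r)"
    using assms apply (intro derivative_eq_intros refl)
    using assms unfolding ff'_def apply simp_all
    apply (simp add: field_simps power2_eq_square)
    apply (simp add: algebra_simps)?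
    done
  then show ?thesis unfolding ff_def NN_def by simp
qed

lemma ff'_deriv: assumes "m > 0" "r > 0"
  shows "(ff' m has_real_derivative ff'' m r) (at r)"
proof -
  have "((\<lambda>r. (m^2 - 4*r^2 - 4*m*r*ln(2*r/m))/(r*(2*r+m)^2)) has_real_derivative ff'' m r) (at r)"
    using assms apply (intro derivative_eq_intros refl)
    using assms unfolding ff''_def ff'_def ff_def NN_def apply simp_all
    apply (subgoal_tac "2*r+m > 0")
    apply (simp add: divide_simps)
    apply algebra
    using assms by simp
  then show ?thesis unfolding ff'_def by simp
qed

lemma uu_deriv: assumes "m > 0" "r > 0"
  shows "(uu m has_real_derivative uu' m r) (at r)"
proof -
  have "((\<lambda>r. sqrt r * ff m r) has_real_derivative inverse (sqrt r) / 2 * ff m r + ff' m r * sqrt r) (at r)"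
    by (rule DERIV_mult[OF DERIV_real_sqrt[OF assms(2)] ff_deriv[OF assms]])
  then have "((\<lambda>r. sqrt r * ff m r) has_real_derivative uu' m r) (at r)"
    by (rule DERIV_cong) (simp add: uu'_def field_simps)
  then show ?thesis unfolding uu_def by simp
qed

lemma uu'_deriv: assumes "m > 0" "r > 0"
  shows "(uu' m has_real_derivative uu'' m r) (at r)"
proof -
  have sd: "((\<lambda>r. 2*sqrt r) has_real_derivative 2 * (inverse (sqrt r) / 2)) (at r)"
    using DERIV_cmult[OF DERIV_real_sqrt[OF assms(2)], of 2] by simp
  have "((\<lambda>r. ff m r/(2*sqrt r) + sqrt r * ff' m r) has_real_derivative
     (ff' m r * (2*sqrt r) - ff m r * (2 * (inverse (sqrt r) / 2))) / ((2*sqrt r)*(2*sqrt r))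
     + (inverse (sqrt r) / 2 * ff' m r + ff'' m r * sqrt r)) (at r)"
    apply (rule DERIV_add)
     apply (rule DERIV_divide[OF ff_deriv[OF assms] sd])
    using assms apply simp
    by (rule DERIV_mult[OF DERIV_real_sqrt[OF assms(2)] ff'_deriv[OF assms]])
  then have "((\<lambda>r. ff m r/(2*sqrt r) + sqrt r * ff' m r) has_real_derivative uu'' m r) (at r)"
    apply (rule DERIV_cong)
    using assms by (simp add: uu''_def field_simps)
  then show ?thesis unfolding uu'_def by simp
qed

lemma uu_ode: assumes "m > 0" "r > 0"
  shows "uu'' m r + uu m r * potential m 0 r = 0"
proof -
  obtain s where s: "s > 0" "r = s^2" using assms
    by (metis real_sqrt_gt_0_iff real_sqrt_pow2 less_eq_real_def)
  have sq: "sqrt r = s" using s by simp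
  have d: "2*s^2+m > 0" using s assms by (smt (verit) zero_less_power)
  have d2: "2*r+m > 0" using assms by simp
  have p: "potential m 0 r = 1/(4*r^2) + 4*m/(r*(2*r+m)^2)"
  proof -
    have h: "1 + m/(2*r) = (2*r+m)/(2*r)" using assms by (simp add: field_simps)
    show ?thesis unfolding potential_def h using assms d2
      by (simp add: power_divide field_simps power2_eq_square power3_eq_cube)
  qed
  have "uu'' m r + uu m r * potential m 0 r
     = sqrt r * (ff'' m r + ff' m r / r + ff m r * (4*m/(r*(2*r+m)^2)))"
    unfolding uu''_def uu_def p sq using s assms d
    by (simp add: field_simps power2_eq_square)
  also have "\<dots> = 0" unfolding ff''_def using assms by simp
  finally show ?thesis .
qed

lemma mvt_helper:
  fixes f f' :: "real \<Rightarrow> real"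
  assumes "a < b" "\<And>x. a \<le> x \<Longrightarrow> x \<le> b \<Longrightarrow> (f has_real_derivative f' x) (at x within {a..b})"
  shows "\<exists>c. a < c \<and> c < b \<and> f b - f a = (b - a) * f' c"
proof -
  have cont: "continuous_on {a..b} f"
    unfolding continuous_on_eq_continuous_within by (auto intro: DERIV_continuous[OF assms(2)])
  have dat: "\<And>x. a < x \<Longrightarrow> x < b \<Longrightarrow> DERIV f x :> f' x"
    using assms(2) at_within_Icc_at by (metis less_eq_real_def)
  obtain l z where lz: "a < z" "z < b" "DERIV f z :> l" "f b - f a = (b - a) * l"
    using MVT[OF assms(1) cont] dat real_differentiable_def by blast
  have "l = f' z" using DERIV_unique[OF lz(3) dat[OF lz(1,2)]] .
  then show ?thesis using lz by blast
qed

lemma NN_deriv: assumes "m > 0" "r > 0"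
  shows "(NN m has_real_derivative (2 - 2*ln(2*r/m) + m/r)) (at r)"
proof -
  have "((\<lambda>r. 4*m - (2*r-m)*(ln(2*r/m) - 2)) has_real_derivative (2 - 2*ln(2*r/m) + m/r)) (at r)"
    using assms apply (intro derivative_eq_intros refl)
    using assms apply simp_all
    apply (simp add: field_simps)
    done
  then show ?thesis unfolding NN_def by simp
qed

lemma NN_pos: assumes "m > 0" "m/2 \<le> r" "r \<le> m*exp 2/2"
  shows "NN m r > 0"
proof -
  have r: "r > 0" using assms by simp
  have "2*r/m \<le> exp 2" using assms by (simp add: field_simps)
  then have "ln(2*r/m) \<le> ln (exp 2)" using r assms by (subst ln_le_cancel_iff) auto
  then have "ln(2*r/m) - 2 \<le> 0" by simp
  moreover have "2*r - m \<ge> 0" using assms by simp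
  ultimately have "(2*r-m)*(ln(2*r/m) - 2) \<le> 0" by (simp add: mult_nonneg_nonpos)
  then show ?thesis unfolding NN_def using assms by simp
qed

lemma NN_dec: assumes "m > 0" "m*exp 2/2 \<le> a" "a < b"
  shows "NN m b < NN m a"
proof (rule DERIV_neg_imp_decreasing[OF assms(3)])
  fix x assume x: "a \<le> x" "x \<le> b"
  have e: "exp (2::real) > 1" by simp
  have mx: "m*exp 2/2 \<le> x" using x assms by simp
  have "m*exp 2 > m*1" using e assms by (intro mult_strict_left_mono) auto
  then have xp: "x > m/2" using mx by linarith
  then have x0: "x > 0" using assms by simp
  have "2*x/m \<ge> exp 2" using mx assms by (simp add: field_simps)
  then have "ln(2*x/m) \<ge> ln (exp 2)" using x0 assms by (subst ln_le_cancel_iff) auto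
  then have L: "ln(2*x/m) \<ge> 2" by simp
  have "m/x < 2" using xp x0 assms by (simp add: field_simps)
  then have "2 - 2*ln(2*x/m) + m/x < 0" using L by simp
  then show "\<exists>y. DERIV (NN m) x :> y \<and> y < 0" using NN_deriv[OF assms(1) x0] by blast
qed

lemma NN_neg: assumes "m > 0" shows "NN m (m*exp 4/2) < 0"
proof -
  have "2*(m*exp 4/2)/m = exp 4" using assms by simp
  then have "NN m (m*exp 4/2) = 4*m - (m*exp 4 - m)*2" unfolding NN_def by simp
  moreover have "exp (4::real) \<ge> 1 + 4" using exp_ge_add_one_self[of 4] by simp
  then have "m*exp 4 \<ge> m*5" using assms by (intro mult_left_mono) auto
  moreover have "4*m - (m*exp 4 - m)*2 = 6*m - 2*(m*exp 4)" by (simp add: algebra_simps)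
  ultimately show ?thesis using assms by linarith
qed

lemma uu_sign: assumes "m > 0"
  shows "\<exists>z>m/2. uu m z = 0 \<and> (\<forall>r. m/2 \<le> r \<and> r < z \<longrightarrow> uu m r > 0) \<and> (\<forall>r>z. uu m r < 0)"
proof -
  define a where "a = m*exp 2/2"
  define b where "b = m*exp 4/2"
  have e2: "exp (2::real) > 1" by simp
  have ab: "a < b" unfolding a_def b_def using assms by simp
  have am: "a > m/2" unfolding a_def using assms e2 by simp
  have cont: "continuous_on {a..b} (NN m)"
  proof (rule continuous_at_imp_continuous_on, intro ballI)
    fix x assume "x \<in> {a..b}"
    then have "x > 0" using am assms by auto
    then show "isCont (NN m) x" using NN_deriv[OF assms] DERIV_isCont by blast
  qed
  have "NN m b \<le> 0" "0 \<le> NN m a" using NN_neg[OF assms] NN_pos[OF assms, of a] am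
    unfolding a_def b_def by auto
  then obtain z where z: "a \<le> z" "z \<le> b" "NN m z = 0"
    using IVT2'[OF _ _ _ cont] ab by fastforce
  have pos: "NN m r > 0" if "m/2 \<le> r" "r < z" for r
  proof (cases "r \<le> a")
    case True then show ?thesis using NN_pos[OF assms that(1)] unfolding a_def by simp
  next
    case False then show ?thesis using NN_dec[OF assms, of r z] that z unfolding a_def by simp
  qed
  have neg: "NN m r < 0" if "r > z" for r
    using NN_dec[OF assms, of z r] that z unfolding a_def by simp
  have sgn: "uu m r = sqrt r * NN m r / (2*r+m)" for r unfolding uu_def ff_def by simp
  show ?thesis
  proof (intro exI conjI allI impI)
    show "z > m/2" using z am by simp
    show "uu m z = 0" using z sgn by simp
    fix r assume "m/2 \<le> r \<and> r < z"
    then show "uu m r > 0" using pos[of r] sgn[of r] assms by simp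
  next
    fix r assume "r > z"
    then have "r > 0" using z am assms by simp
    then show "uu m r < 0" using neg[of r] \<open>r > z\<close> sgn[of r] assms
      by (simp add: mult_pos_neg divide_neg_pos)
  qed
qed

lemma uu_init: assumes "m > 0" shows "uu' m (m/2) = uu m (m/2) / m"
proof -
  have n: "NN m (m/2) = 4*m" unfolding NN_def by simp
  have f: "ff m (m/2) = 2" unfolding ff_def n using assms by simp
  have f': "ff' m (m/2) = 0" unfolding ff'_def using assms by (simp add: power2_eq_square)
  have s: "sqrt (m/2) * sqrt (m/2) = m/2" using assms by simp
  have sp: "sqrt (m/2) > 0" using assms by simp
  show ?thesis unfolding uu'_def uu_def f f' using s sp
    by (simp add: field_simps)
qed

lemma pot_bound: assumes "m > 0" "r \<ge> m/2"
  shows "\<bar>potential m lam r\<bar> \<le> 9/m^2 + 16*\<bar>lam\<bar>"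
proof -
  have r: "r > 0" using assms by simp
  define x where "x = m/(2*r)"
  have x0: "x > 0" and x1: "x \<le> 1" unfolding x_def using assms r by (auto simp: field_simps)
  have t1: "1/(4*r^2) \<le> 1/m^2"
  proof -
    have "m^2 \<le> (2*r)^2" using assms by (intro power_mono) auto
    then show ?thesis using assms by (simp add: field_simps power2_eq_square)
  qed
  have t2: "(m/r^3)/(1+x)^2 \<le> 8/m^2"
  proof -
    have "(1+x)^2 \<ge> 1" using x0 by simp
    then have "(m/r^3)/(1+x)^2 \<le> (m/r^3)/1" using assms r
      by (intro divide_left_mono) auto
    moreover have "m^3 \<le> (2*r)^3" using assms by (intro power_mono) auto
    then have "m/r^3 \<le> 8/m^2" using assms r by (simp add: field_simps power2_eq_square power3_eq_cube)
    ultimately show ?thesis by simp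
  qed
  have t3: "\<bar>lam * (1+x)^4\<bar> \<le> 16*\<bar>lam\<bar>"
  proof -
    have "(1+x)^4 \<le> 2^4" using x0 x1 by (intro power_mono) auto
    then have "\<bar>lam\<bar> * (1+x)^4 \<le> \<bar>lam\<bar> * 16" by (intro mult_left_mono) auto
    then show ?thesis using x0 by (simp add: abs_mult)
  qed
  have "potential m lam r = 1/(4*r^2) + (m/r^3)/(1+x)^2 + lam*(1+x)^4"
    unfolding potential_def x_def by simp
  moreover have "1/(4*r^2) \<ge> 0" "(m/r^3)/(1+x)^2 \<ge> 0" using r assms x0 by auto
  ultimately show ?thesis using t1 t2 t3 by linarith
qed

theorem mainTheorem8:
  fixes m lam :: real and v v' v'' :: "real \<Rightarrow> real"
  assumes "m > 0" and "lam < 0"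
    and "\<And>r. r \<ge> m/2 \<Longrightarrow> (v has_real_derivative v' r) (at r within {m/2..})"
    and "\<And>r. r \<ge> m/2 \<Longrightarrow> (v' has_real_derivative v'' r) (at r within {m/2..})"
    and "\<And>r. r \<ge> m/2 \<Longrightarrow> v'' r + v r * potential m lam r = 0"
    and "v (m/2) = 1" and "v' (m/2) = 1 / m"
  shows "\<forall>r1 r2. r1 \<ge> m/2 \<and> r2 \<ge> m/2 \<and> v r1 = 0 \<and> v r2 = 0 \<longrightarrow> r1 = r2"
proof -
  note m0 = assms(1) and lam0 = assms(2) and dv = assms(3) and dv' = assms(4)
    and ode = assms(5) and v0 = assms(6) and v'0 = assms(7)
  define c where "c = (\<lambda>r. -lam*(1+m/(2*r))^4)"
  have c_pos: "c r > 0" if "r \<ge> m/2" for r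
  proof -
    have "1 + m/(2*r) > 0" using that m0 by (simp add: add_pos_pos)
    then have "(1 + m/(2*r))^4 > 0" by simp
    then show ?thesis unfolding c_def using lam0 by (simp add: mult_neg_pos)
  qed
  have pot: "potential m lam r = potential m 0 r - c r" for r
    unfolding potential_def c_def by simp
  have v''eq: "v'' r = - v r * (potential m 0 r - c r)" if "r \<ge> m/2" for r
    using ode[OF that] pot[of r] by simp
  have du: "(uu m has_real_derivative uu' m r) (at r within {m/2..})" if "r \<ge> m/2" for r
    using that m0 by (intro has_field_derivative_at_within[OF uu_deriv[OF m0]]) auto
  have du': "(uu' m has_real_derivative uu'' m r) (at r within {m/2..})" if "r \<ge> m/2" for r
    using that m0 by (intro has_field_derivative_at_within[OF uu'_deriv[OF m0]]) auto
  have u''eq: "uu'' m r = - uu m r * potential m 0 r" if "r \<ge> m/2" for r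
    using uu_ode[OF m0, of r] that m0 by simp
  define W where "W = (\<lambda>r. uu m r * v' r - uu' m r * v r)"
  have dW: "(W has_real_derivative c r * uu m r * v r) (at r within {m/2..})" if "r \<ge> m/2" for r
  proof -
    have "(W has_real_derivative (uu' m r * v' r + v'' r * uu m r) - (uu'' m r * v r + v' r * uu' m r))
        (at r within {m/2..})"
      unfolding W_def by (intro DERIV_diff DERIV_mult du du' dv dv' that)
    then show ?thesis
      by (rule DERIV_cong) (simp add: v''eq[OF that] u''eq[OF that] algebra_simps)
  qed
  have W0: "W (m/2) = 0" unfolding W_def using uu_init[OF m0] v0 v'0 by simp
  define g where "g = (\<lambda>r. v r * W r / uu m r)"
  have dg: "(g has_real_derivative (W r)^2/(uu m r)^2 + c r * (v r)^2) (at r within {m/2..})"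
    if "r \<ge> m/2" "uu m r \<noteq> 0" for r
  proof -
    have "(g has_real_derivative ((v' r * W r + c r * uu m r * v r * v r) * uu m r - v r * W r * uu' m r)
         / (uu m r * uu m r)) (at r within {m/2..})"
      unfolding g_def by (intro DERIV_divide DERIV_mult dv dW du that)
    then show ?thesis
      by (rule DERIV_cong) (use that in \<open>simp add: W_def field_simps power2_eq_square\<close>)
  qed
  have vcont: "continuous_on {m/2..} v"
    unfolding continuous_on_eq_continuous_within by (auto intro: DERIV_continuous[OF dv])
  have zd: False if a: "a \<ge> m/2" "v a = 0" "v' a = 0" for a
  proof -
    define K where "K = 1 + (9/m^2 + 16*\<bar>lam\<bar>)"
    define F where "F = (\<lambda>r. exp (K*r) * ((v r)*(v r) + (v' r)*(v' r)))"
    define F' where "F' = (\<lambda>r. exp (K*r) * K * ((v r)*(v r) + (v' r)*(v' r))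
        + (v' r * v r + v' r * v r + (v'' r * v' r + v'' r * v' r)) * exp (K*r))"
    have dexp: "((\<lambda>r. exp (K*r)) has_real_derivative exp (K*r) * K) (at r within {m/2..})" for r
      by (rule has_field_derivative_at_within) (auto intro!: derivative_eq_intros)
    have dF: "(F has_real_derivative F' r) (at r within {m/2..})" if "r \<ge> m/2" for r
    proof -
      have "(F has_real_derivative exp (K*r) * K * ((v r)*(v r) + (v' r)*(v' r))
        + (v' r * v r + v' r * v r + (v'' r * v' r + v'' r * v' r)) * exp (K*r)) (at r within {m/2..})"
        unfolding F_def by (intro DERIV_mult DERIV_add dexp dv dv' that)
      then show ?thesis unfolding F'_def .
    qed
    have F'nn: "F' r \<ge> 0" if "r \<ge> m/2" for r
    proof -
      let ?E = "(v r)*(v r) + (v' r)*(v' r)"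
      have pb: "\<bar>potential m lam r\<bar> \<le> 9/m^2 + 16*\<bar>lam\<bar>" using pot_bound[OF m0 that] .
      have "0 \<le> (\<bar>v r\<bar> - \<bar>v' r\<bar>)^2" by simp
      then have h1: "2*\<bar>v r * v' r\<bar> \<le> ?E"
        by (simp add: power2_eq_square algebra_simps abs_mult abs_mult_self_eq)
      have h2: "\<bar>1 - potential m lam r\<bar> \<le> K" using pb unfolding K_def by linarith
      have "v'' r = - v r * potential m lam r" using ode[OF that] by simp
      then have eq: "v' r * v r + v' r * v r + (v'' r * v' r + v'' r * v' r)
          = 2 * (v r * v' r) * (1 - potential m lam r)" by (simp add: algebra_simps)
      have "\<bar>2 * (v r * v' r) * (1 - potential m lam r)\<bar> \<le> ?E * K"
        unfolding abs_mult using h1 h2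
        by (simp add: mult_mono' mult.assoc[symmetric])
      then have "K * ?E + 2 * (v r * v' r) * (1 - potential m lam r) \<ge> 0"
        by (simp add: algebra_simps abs_le_iff)
      then have "exp (K*r) * (K * ?E + 2 * (v r * v' r) * (1 - potential m lam r)) \<ge> 0" by simp
      then show ?thesis unfolding F'_def eq by (simp add: algebra_simps)
    qed
    have "a \<noteq> m/2" using a v0 by auto
    then have am: "m/2 < a" using a by simp
    obtain \<xi> where \<xi>: "m/2 < \<xi>" "\<xi> < a" "F a - F (m/2) = (a - m/2) * F' \<xi>"
      using mvt_helper[OF am, of F F'] dF DERIV_subset by (metis atLeastAtMost_iff atLeast_iff subsetI)
    have "F a = 0" unfolding F_def using a by simp
    moreover have "F (m/2) > 0" unfolding F_def using v0 by (simp add: add_pos_nonneg)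
    moreover have "(a - m/2) * F' \<xi> \<ge> 0" using am F'nn[of \<xi>] \<xi> by simp
    ultimately show False using \<xi>(3) by linarith
  qed
  have crit: False if "r \<ge> m/2" "uu m r \<noteq> 0" "(W r)^2/(uu m r)^2 + c r * (v r)^2 = 0" for r
  proof -
    have t1: "(W r)^2/(uu m r)^2 \<ge> 0" by simp
    have t2: "c r * (v r)^2 \<ge> 0" using c_pos[OF that(1)] by simp
    have "c r * (v r)^2 = 0" using t1 t2 that(3) by linarith
    then have vr: "v r = 0" using c_pos[OF that(1)] by simp
    have "(W r)^2/(uu m r)^2 = 0" using t1 t2 that(3) by linarith
    then have "W r = 0" using that(2) by simp
    then have "v' r = 0" using vr that(2) unfolding W_def by simp
    then show False using zd[OF that(1) vr] by simp
  qed
  have gzero: False if hh: "m/2 \<le> a" "a < b" "\<forall>r\<in>{a..b}. uu m r \<noteq> 0" "g a = g b" for a b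
  proof -
    have dgab: "(g has_real_derivative (W x)^2/(uu m x)^2 + c x * (v x)^2) (at x within {a..b})"
      if "a \<le> x" "x \<le> b" for x
    proof (rule DERIV_subset)
      show "(g has_real_derivative (W x)^2/(uu m x)^2 + c x * (v x)^2) (at x within {m/2..})"
        using dg[of x] hh(1,3) that by simp
      show "{a..b} \<subseteq> {m/2..}" using hh(1) by auto
    qed
    obtain \<xi> where \<xi>: "a < \<xi>" "\<xi> < b"
        "g b - g a = (b - a) * ((W \<xi>)^2/(uu m \<xi>)^2 + c \<xi> * (v \<xi>)^2)"
      using mvt_helper[OF hh(2) dgab] by blast
    have "(W \<xi>)^2/(uu m \<xi>)^2 + c \<xi> * (v \<xi>)^2 = 0" using \<xi> hh(2,4) by simp
    moreover have "uu m \<xi> \<noteq> 0" using hh(3) \<xi> by simp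
    moreover have "\<xi> \<ge> m/2" using hh(1) \<xi> by simp
    ultimately show False using crit by blast
  qed
  obtain z where z: "z > m/2" "uu m z = 0" "\<And>r. m/2 \<le> r \<Longrightarrow> r < z \<Longrightarrow> uu m r > 0"
    "\<And>r. r > z \<Longrightarrow> uu m r < 0"
    using uu_sign[OF m0] by blast
  have A1: "v a \<noteq> 0" if "m/2 < a" "a < z" for a
  proof
    assume va: "v a = 0"
    have "g a = 0" unfolding g_def va by simp
    moreover have "g (m/2) = 0" unfolding g_def W0 by simp
    moreover have "\<forall>r\<in>{m/2..a}. uu m r \<noteq> 0" using z(3) that by fastforce
    ultimately show False using gzero[of "m/2" a] that by simp
  qed
  have A2: "v r > 0" if ar: "m/2 \<le> r" "r < z" for r
  proof (rule ccontr)
    assume "\<not> v r > 0"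
    then have vr: "v r \<le> 0" by simp
    have "continuous_on {m/2..r} v" using vcont by (rule continuous_on_subset) auto
    then obtain x where x: "m/2 \<le> x" "x \<le> r" "v x = 0"
      using IVT2'[of v r 0 "m/2"] vr v0 ar by auto
    have "x \<noteq> m/2" using x v0 by auto
    then show False using A1[of x] x ar by simp
  qed
  have A3: "v z \<noteq> 0"
  proof
    assume vz: "v z = 0"
    have dWz: "(W has_real_derivative c x * uu m x * v x) (at x within {m/2..z})"
      if "m/2 \<le> x" "x \<le> z" for x
    proof (rule DERIV_subset)
      show "(W has_real_derivative c x * uu m x * v x) (at x within {m/2..})"
        using dW[of x] that by simp
      show "{m/2..z} \<subseteq> {m/2..}" by auto
    qed
    obtain \<xi> where \<xi>: "m/2 < \<xi>" "\<xi> < z" "W z - W (m/2) = (z - m/2) * (c \<xi> * uu m \<xi> * v \<xi>)"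
      using mvt_helper[OF z(1) dWz] by blast
    have "W z = 0" unfolding W_def using vz z(2) by simp
    moreover have "c \<xi> > 0" using c_pos[of \<xi>] \<xi> by simp
    moreover have "uu m \<xi> > 0" using z(3)[of \<xi>] \<xi> by simp
    moreover have "v \<xi> > 0" using A2[of \<xi>] \<xi> by simp
    ultimately have "c \<xi> * uu m \<xi> * v \<xi> > 0" "W z = 0" by simp_all
    moreover have "z - m/2 > 0" using z(1) by simp
    ultimately have "W z - W (m/2) > 0" using \<xi>(3) by simp
    then show False using \<open>W z = 0\<close> W0 by simp
  qed
  have zeros: "r > z" if "r \<ge> m/2" "v r = 0" for r
  proof (rule ccontr)
    assume "\<not> r > z"
    then have "r < z \<or> r = z" by auto
    then show False using A2[of r] A3 that by auto
  qed
  have B: False if "m/2 \<le> a" "a < b" "v a = 0" "v b = 0" for a b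
  proof -
    have za: "z < a" using zeros that by simp
    have "\<forall>r\<in>{a..b}. uu m r \<noteq> 0"
    proof
      fix r assume "r \<in> {a..b}"
      then have "r > z" using za by simp
      then show "uu m r \<noteq> 0" using z(4)[of r] by simp
    qed
    moreover have "g a = g b" unfolding g_def using that by simp
    ultimately show False using gzero[of a b] that by simp
  qed
  show ?thesis
  proof (intro allI impI)
    fix r1 r2 assume h: "m/2 \<le> r1 \<and> m/2 \<le> r2 \<and> v r1 = 0 \<and> v r2 = 0"
    show "r1 = r2"
    proof (rule ccontr)
      assume "r1 \<noteq> r2"
      then have "r1 < r2 \<or> r2 < r1" by auto
      then show False using B[of r1 r2] B[of r2 r1] h by auto
    qed
  qed
qed

end
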